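(* Let $\mathcal G$ be a real Lie algebra that is nilpotent of step at most $3$, i.e. $[\mathcal G,[\mathcal G,[\mathcal G,\mathcal G]]]=0$. Then there exist a linear endomorphism $f$ of $\mathcal G$ with $f([x,y])-[f(x),f(y)]\in\mathcal Z(\mathcal G)$ for all $x,y$, and an invertible linear endomorphism $d$ of $\mathcal G$ with $d[x,y]=[dx,fy]+[fx,dy]$ for all $x,y$, such that the product $xy:=d^{-1}[fx,dy]$ is left symmetric and compatible with the bracket, i.e. $(xy)z-x(yz)=(yx)z-y(xz)$ and $xy-yx=[x,y]$ for all $x,y,z$. Consequently every connected Lie group with Lie algebra $\mathcal G$ carries a flat torsion-free left invariant affine connection $\nabla$ with $\nabla_{x^+}y^+=(xy)^+$.
   Context: $\mathcal Z(\mathcal G)$ denotes the center of $\mathcal G$; $x^+$ is the left invariant vector field with value $x$ at the unit. *)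

theory Defs
  imports "HOL-Analysis.Analysis"
begin

definition lie_algebra :: "('a::real_vector \<Rightarrow> 'a \<Rightarrow> 'a) \<Rightarrow> bool" where
  "lie_algebra br \<longleftrightarrow>
     (\<forall>x. linear (br x)) \<and> (\<forall>y. linear (\<lambda>x. br x y)) \<and>
     (\<forall>x. br x x = 0) \<and>
     (\<forall>x y z. br x (br y z) + br y (br z x) + br z (br x y) = 0)"

definition lie_center :: "('a \<Rightarrow> 'a \<Rightarrow> 'a::real_vector) \<Rightarrow> 'a set" where
  "lie_center br = {z. \<forall>x. br z x = 0}"

definition nilpotent_step3 :: "('a \<Rightarrow> 'a \<Rightarrow> 'a::real_vector) \<Rightarrow> bool" where
  "nilpotent_step3 br \<longleftrightarrow> (\<forall>x y z w. br w (br z (br x y)) = 0)"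

end

theory Submission
  imports Defs
begin

lemma ex_proj:
  fixes S :: "'a::euclidean_space set"
  assumes "subspace S"
  shows "\<exists>P. linear P \<and> (\<forall>x. P x \<in> S) \<and> (\<forall>s\<in>S. P s = s)"
  using linear_exists_left_inverse_on[of id S] assms
  by (metis image_subset_iff linear_id inj_on_id id_apply UNIV_I)

locale L3 =
  fixes br :: "'a::euclidean_space \<Rightarrow> 'a \<Rightarrow> 'a" and P :: "'a \<Rightarrow> 'a"
  assumes lie: "lie_algebra br" and nil: "nilpotent_step3 br"
    and linP: "linear P"
    and PS: "\<And>x. P x \<in> span {br a b | a b. True}"
    and Pid: "\<And>s. s \<in> span {br a b | a b. True} \<Longrightarrow> P s = s"
begin

abbreviation "S \<equiv> span {br a b | a b. True}"

lemma linR: "linear (br x)" and linL: "linear (\<lambda>x. br x y)"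
  using lie unfolding lie_algebra_def by auto

lemma br_addR: "br x (a + b) = br x a + br x b" by (rule linear_add[OF linR])
lemma br_diffR: "br x (a - b) = br x a - br x b" by (rule linear_diff[OF linR])
lemma br_scaleR: "br x (c *\<^sub>R a) = c *\<^sub>R br x a" by (rule linear_scale[OF linR])
lemma br_addL: "br (a + b) y = br a y + br b y" using linear_add[OF linL] by blast
lemma br_diffL: "br (a - b) y = br a y - br b y" using linear_diff[OF linL] by blast
lemma br_scaleL: "br (c *\<^sub>R a) y = c *\<^sub>R br a y" using linear_scale[OF linL] by blast
lemma br_0R: "br x 0 = 0" by (rule linear_0[OF linR])
lemma br_0L: "br 0 y = 0" using linear_0[OF linL] by blast
lemma br_negR: "br x (- a) = - br x a" by (rule linear_neg[OF linR])
lemma br_negL: "br (- a) y = - br a y" using linear_neg[OF linL] by blast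

lemmas bl = br_addR br_diffR br_scaleR br_addL br_diffL br_scaleL br_0R br_0L br_negR br_negL

lemma alt: "br x x = 0" using lie unfolding lie_algebra_def by auto
lemma jac: "br x (br y z) + br y (br z x) + br z (br x y) = 0"
  using lie unfolding lie_algebra_def by auto
lemma nil3: "br w (br z (br x y)) = 0" using nil unfolding nilpotent_step3_def by auto

lemma anti: "br y x = - br x y"
proof -
  have "br (x+y) (x+y) = br x x + br x y + (br y x + br y y)" by (simp add: bl)
  then have "br x y + br y x = 0" by (simp add: alt)
  then show ?thesis by (simp add: eq_neg_iff_add_eq_0 add.commute)
qed

lemma C1: "s \<in> S \<Longrightarrow> br u (br v s) = 0"
  by (induction rule: span_induct_alt) (auto simp: bl nil3)

lemma C2a: "s \<in> S \<Longrightarrow> br (br c d) s = 0"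
  apply (induction rule: span_induct_alt)
  subgoal by (simp add: bl)
  subgoal for k x y
  proof -
    assume h: "x \<in> {br a b | a b. True}" "br (br c d) y = 0"
    then obtain a b where x: "x = br a b" by auto
    have "br (br c d) (br a b) = 0"
      using jac[of c d "br a b"] nil3[of c d a b] nil3[of d "br a b" c] anti[of "br a b" c]
      by (simp add: anti[of "br a b" "br c d"] nil3 br_negR)
    then show ?thesis using h x by (simp add: bl)
  qed
  done

lemma C2: "s \<in> S \<Longrightarrow> t \<in> S \<Longrightarrow> br s t = 0"
  apply (induction rule: span_induct_alt)
  subgoal by (simp add: bl)
  subgoal for k x y using C2a by (auto simp add: bl)
  done

lemma brS: "br a b \<in> S" by (rule span_base) auto
lemma PP: "P (P x) = P x" using Pid PS by blast
lemma Pbr: "P (br a b) = br a b" using Pid brS by blast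

lemma Z1: "s \<in> S \<Longrightarrow> br (br x s) z = 0"
  using C1[of s z x] anti[of z "br x s"] by simp
lemma Z2: "s \<in> S \<Longrightarrow> br (br s y) z = 0"
  using Z1[of s y z] anti[of s y] by (simp add: bl)

definition "fP x = (2/3) *\<^sub>R x - (2/9) *\<^sub>R P x"
definition "dP x = x + (1/3) *\<^sub>R P x"
definition "eP x = x - (1/4) *\<^sub>R P x"

lemma Padd: "P (a + b) = P a + P b" by (rule linear_add[OF linP])
lemma Pdiff: "P (a - b) = P a - P b" by (rule linear_diff[OF linP])
lemma Pscale: "P (c *\<^sub>R a) = c *\<^sub>R P a" by (rule linear_scale[OF linP])

lemma linf: "linear fP" unfolding fP_def
  by (rule linearI) (simp_all add: Padd Pscale algebra_simps flip: scaleR_add_left)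
lemma lind: "linear dP" unfolding dP_def
  by (rule linearI) (simp_all add: Padd Pscale algebra_simps flip: scaleR_add_left)

lemma ed: "eP (dP x) = x"
  by (simp add: eP_def dP_def Padd Pscale PP algebra_simps flip: scaleR_add_left)
lemma de: "dP (eP x) = x"
  by (simp add: eP_def dP_def Pdiff Pscale PP algebra_simps flip: scaleR_add_left)

lemma bijd: "bij dP"
  by (metis bij_betw_byWitness[of UNIV eP dP UNIV] ed de UNIV_I subset_UNIV image_subset_iff) 
lemma invd: "inv dP = eP"
  by (rule inv_unique_comp) (auto simp: ed de)

lemma eS: "z \<in> S \<Longrightarrow> eP z = (3/4) *\<^sub>R z"
  by (simp add: eP_def Pid algebra_simps flip: scaleR_add_left)

definition "pr x y = eP (br (fP x) (dP y))"

lemma C2P: "br (P x) (P y) = 0" using C2 PS by blast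
lemma C1P: "br u (br v (P w)) = 0" using C1 PS by blast
lemma Z1P: "br (br x (P w)) z = 0" using Z1 PS by blast
lemma Z2P: "br (br (P w) y) z = 0" using Z2 PS by blast

lemma pr_eq: "pr x y = (1/2) *\<^sub>R br x y + (1/6) *\<^sub>R br x (P y) - (1/6) *\<^sub>R br (P x) y"
proof -
  have "br (fP x) (dP y) = (2/3) *\<^sub>R br x y + (2/9) *\<^sub>R br x (P y) - (2/9) *\<^sub>R br (P x) y"
    by (simp add: fP_def dP_def bl C2P algebra_simps flip: scaleR_add_left)
  moreover have "(2/3) *\<^sub>R br x y + (2/9) *\<^sub>R br x (P y) - (2/9) *\<^sub>R br (P x) y \<in> S"
    by (intro span_add span_diff span_scale brS)
  ultimately have "pr x y = (3/4) *\<^sub>R ((2/3) *\<^sub>R br x y + (2/9) *\<^sub>R br x (P y) - (2/9) *\<^sub>R br (P x) y)"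
    unfolding pr_def by (simp only: eS)
  then show ?thesis by (simp add: algebra_simps)
qed

lemma prS: "pr x y \<in> S"
  unfolding pr_eq by (intro span_add span_diff span_scale brS)

lemma pr1: "pr (pr x y) z = (1/6) *\<^sub>R br (br x y) z"
proof -
  have P1: "P (pr x y) = pr x y" using Pid prS by blast
  have "br (pr x y) z = (1/2) *\<^sub>R br (br x y) z" unfolding pr_eq
    by (simp add: bl Z1P Z2P)
  moreover have "br (pr x y) (P z) = 0" using C2[OF prS PS] .
  ultimately show ?thesis unfolding pr_eq[of "pr x y"] P1 by (simp add: algebra_simps flip: scaleR_add_left)
qed

lemma pr2: "pr x (pr y z) = (1/3) *\<^sub>R br x (br y z)"
proof -
  have P1: "P (pr y z) = pr y z" using Pid prS by blast
  have "br x (pr y z) = (1/2) *\<^sub>R br x (br y z)" unfolding pr_eq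
    by (simp add: bl C1P anti[of "P y" z] br_negR)
  moreover have "br (P x) (pr y z) = 0" using C2[OF PS prS] .
  ultimately show ?thesis unfolding pr_eq[of x "pr y z"] P1 by (simp add: algebra_simps flip: scaleR_add_left)
qed

lemma lsym: "pr (pr x y) z - pr x (pr y z) = pr (pr y x) z - pr y (pr x z)"
proof -
  have "br x (br y z) - br y (br x z) = br (br x y) z"
    using jac[of x y z] anti[of x z] anti[of z "br x y"] by (simp add: bl algebra_simps flip: scaleR_add_left)
  moreover have "br (br y x) z = - br (br x y) z" by (simp add: anti[of y x] bl)
  ultimately show ?thesis unfolding pr1 pr2
    by (simp add: algebra_simps flip: scaleR_add_left) 
qed

lemma prcomm: "pr x y - pr y x = br x y"
  unfolding pr_eq by (simp add: anti[of y x] anti[of "P y" x] anti[of y "P x"] bl algebra_simps flip: scaleR_add_left)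

lemma fhom: "fP (br x y) - br (fP x) (fP y) \<in> lie_center br"
proof -
  have "fP (br x y) - br (fP x) (fP y) = (4/27) *\<^sub>R (br x (P y) + br (P x) y)"
    by (simp add: fP_def Pbr bl C2P algebra_simps flip: scaleR_add_left)
  then show ?thesis unfolding lie_center_def by (simp add: bl Z1P Z2P)
qed

lemma dder: "dP (br x y) = br (dP x) (fP y) + br (fP x) (dP y)"
proof -
  have h: "v + (1/3) *\<^sub>R v = (4/3) *\<^sub>R v" for v :: 'a
  proof -
    have "(4/3::real) *\<^sub>R v = (1 + 1/3) *\<^sub>R v" by simp
    then show ?thesis by (simp only: scaleR_add_left scaleR_one)
  qed
  have "dP (br x y) = (4/3) *\<^sub>R br x y" by (simp add: dP_def Pbr h)
  then show ?thesis by (simp add: fP_def dP_def bl C2P algebra_simps flip: scaleR_add_left)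
qed
end

theorem mainTheorem16:
  fixes br :: "'a::euclidean_space \<Rightarrow> 'a \<Rightarrow> 'a"
  assumes "lie_algebra br"
    and "nilpotent_step3 br"
  shows "\<exists>f d. linear f \<and> (\<forall>x y. f (br x y) - br (f x) (f y) \<in> lie_center br) \<and>
           linear d \<and> bij d \<and>
           (\<forall>x y. d (br x y) = br (d x) (f y) + br (f x) (d y)) \<and>
           (let prod = (\<lambda>x y. inv d (br (f x) (d y))) in
              (\<forall>x y z. prod (prod x y) z - prod x (prod y z) = prod (prod y x) z - prod y (prod x z)) \<and>
              (\<forall>x y. prod x y - prod y x = br x y))"
proof -
  obtain P where P: "linear P" "\<forall>x. P x \<in> span {br a b | a b. True}"
    "\<forall>s\<in>span {br a b | a b. True}. P s = s"
    using ex_proj[OF subspace_span[of "{br a b | a b. True}"]] by blast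
  interpret L: L3 br P
    by (rule L3.intro) (use assms P in auto)
  have pe: "(\<lambda>x y. inv L.dP (br (L.fP x) (L.dP y))) = L.pr"
    by (simp add: L.invd L.pr_def fun_eq_iff)
  show ?thesis
    apply (rule exI[of _ L.fP], rule exI[of _ L.dP])
    unfolding Let_def pe
    using L.linf L.fhom L.lind L.bijd L.dder L.lsym L.prcomm by blast
qed

end
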